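(* Let $G$ be a finite $3$-group with $\psi'(G)>\frac{31}{77}$. Then either $G\simeq \mathcal{C}_{3^t}$ for some integer $t\ge 0$, or $G\simeq \mathcal{C}_3\times\mathcal{C}_3$.
   Context: For a finite group $G$, $\psi(G)=\sum_{x\in G} o(x)$ and $\psi'(G)=\psi(G)/\psi(\mathcal{C}_{|G|})$, where $\mathcal{C}_n$ is the cyclic group of order $n$. *)

theory Defs
  imports "HOL-Algebra.Algebra"
begin

definition psi :: "('a, 'b) monoid_scheme \<Rightarrow> nat" where
  "psi G = (\<Sum>x\<in>carrier G. group.ord G x)"

abbreviation cyclic_grp :: "nat \<Rightarrow> int monoid" where
  "cyclic_grp n \<equiv> integer_mod_group n"

definition psi' :: "('a, 'b) monoid_scheme \<Rightarrow> real" where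
  "psi' G = real (psi G) / real (psi (cyclic_grp (order G)))"

end

theory Submission
  imports Defs "HOL-Number_Theory.Totient"
begin


context group begin

lemma cancel_l1: "x \<in> carrier G \<Longrightarrow> y \<in> carrier G \<Longrightarrow> x \<otimes> (inv x \<otimes> y) = y"
  by (simp add: m_assoc[symmetric])
lemma cancel_l2: "x \<in> carrier G \<Longrightarrow> y \<in> carrier G \<Longrightarrow> inv x \<otimes> (x \<otimes> y) = y"
  by (simp add: m_assoc[symmetric])

lemma conj_pow_nat:
  assumes z: "z \<in> carrier G" and a: "a \<in> carrier G"
  shows "z \<otimes> a [^] (k::nat) \<otimes> inv z = (z \<otimes> a \<otimes> inv z) [^] k"
proof (induction k)
  case 0 then show ?case using assms by simp
next
  case (Suc k)
  have "z \<otimes> a [^] Suc k \<otimes> inv z = (z \<otimes> a [^] k \<otimes> inv z) \<otimes> (z \<otimes> a \<otimes> inv z)"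
    using assms by (simp add: m_assoc cancel_l2)
  then show ?case using Suc by simp
qed

lemma conj_iter:
  assumes z: "z \<in> carrier G" and g: "g \<in> carrier G"
    and r: "z \<otimes> g \<otimes> inv z = g [^] (\<rho>::nat)"
  shows "z [^] (k::nat) \<otimes> g \<otimes> inv (z [^] k) = g [^] (\<rho> ^ k)"
proof (induction k)
  case 0 then show ?case using assms by simp
next
  case (Suc k)
  have "z [^] Suc k \<otimes> g \<otimes> inv (z [^] Suc k) = z \<otimes> (z [^] k \<otimes> g \<otimes> inv (z [^] k)) \<otimes> inv z"
  proof -
    have e: "z [^] Suc k = z \<otimes> z [^] k" using z by (rule nat_pow_Suc2)
    show ?thesis unfolding e using assms by (simp add: inv_mult_group m_assoc del: nat_pow_Suc)
  qed
  also have "\<dots> = (z \<otimes> g \<otimes> inv z) [^] (\<rho> ^ k)" using Suc conj_pow_nat[OF z g] by simp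
  also have "\<dots> = g [^] (\<rho> ^ Suc k)" using r g by (simp add: nat_pow_pow)
  finally show ?case .
qed

lemma conj_pow_gen:
  assumes z: "z \<in> carrier G" and g: "g \<in> carrier G"
    and r: "z \<otimes> g \<otimes> inv z = g [^] (\<rho>::nat)"
  shows "z [^] (k::nat) \<otimes> g [^] (c::nat) \<otimes> inv (z [^] k) = g [^] (\<rho> ^ k * c)"
proof -
  have "z [^] k \<otimes> g [^] c \<otimes> inv (z [^] k) = (z [^] k \<otimes> g \<otimes> inv (z [^] k)) [^] c"
    using conj_pow_nat z g by simp
  also have "\<dots> = g [^] (\<rho> ^ k * c)" using conj_iter[OF z g r] g by (simp add: nat_pow_pow)
  finally show ?thesis .
qed

lemma cube_formula:
  assumes z: "z \<in> carrier G" and a: "a \<in> carrier G"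
  shows "(z \<otimes> a) [^] (3::nat) = (z [^] (1::nat) \<otimes> a \<otimes> inv (z [^] (1::nat))) \<otimes> (z [^] (2::nat) \<otimes> a \<otimes> inv (z [^] (2::nat)))
       \<otimes> (z [^] (3::nat) \<otimes> a \<otimes> inv (z [^] (3::nat))) \<otimes> z [^] (3::nat)"
  using assms by (simp add: numeral_3_eq_3 numeral_2_eq_2 m_assoc inv_mult_group cancel_l2)

end


lemma cube_mod3: "(\<rho>::nat) ^ 3 mod 3 = \<rho> mod 3"
proof -
  have "\<rho> ^ 3 mod 3 = (\<rho> mod 3) ^ 3 mod 3" by (simp add: power_mod)
  moreover have "\<rho> mod 3 = 0 \<or> \<rho> mod 3 = 1 \<or> \<rho> mod 3 = 2" by presburger
  ultimately show ?thesis by auto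
qed

context group begin

lemma rc_eq: "u \<in> carrier G \<Longrightarrow> v \<in> carrier G \<Longrightarrow> c \<in> carrier G \<Longrightarrow>
   (u \<otimes> c) \<otimes> inv (v \<otimes> c) = u \<otimes> inv v"
  by (simp add: inv_mult_group m_assoc cancel_l1)

lemma coset_eq_iff:
  assumes "subgroup H G" "a \<in> carrier G" "b \<in> carrier G"
  shows "H #> a = H #> b \<longleftrightarrow> a \<otimes> inv b \<in> H"
proof
  assume "H #> a = H #> b"
  then have "a \<in> H #> b" using rcos_self assms by blast
  then show "a \<otimes> inv b \<in> H" using subgroup.rcos_module_imp[OF assms(1) is_group] assms by blast
next
  assume "a \<otimes> inv b \<in> H"
  then have "a \<in> H #> b" using subgroup.rcos_module_rev[OF assms(1) is_group] assms by blast
  then show "H #> a = H #> b" using repr_independence assms by metis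
qed

lemma int_pow_to_nat:
  assumes fin: "finite (carrier G)" and g: "g \<in> carrier G"
  shows "\<exists>k::nat. g [^] (i::int) = g [^] k"
proof -
  have o: "ord g > 0" using ord_ge_1[OF fin g] by simp
  have "g [^] i = g [^] (int (nat (i mod int (ord g))))"
  proof -
    have "int (ord g) dvd int (nat (i mod int (ord g))) - i"
      using o by (simp add: mod_eq_dvd_iff[symmetric])
    then show ?thesis using g int_pow_eq by blast
  qed
  then show ?thesis by (metis int_pow_int)
qed

end


context group begin

lemma core:
  assumes fin: "finite (carrier G)" and g: "g \<in> carrier G"
    and ordg: "ord g = 3 ^ j" and j: "j \<ge> 1" and ordG: "order G = 3 ^ Suc j"
    and noc: "\<forall>u\<in>carrier G. ord u \<noteq> order G"
  shows "\<exists>y\<in>carrier G. y \<notin> range (\<lambda>i::int. g [^] i) \<and> y \<otimes> y \<notin> range (\<lambda>i::int. g [^] i) \<and>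
     (\<exists>\<rho> k. y \<otimes> g \<otimes> inv y = g [^] (\<rho>::nat) \<and> \<rho> mod 3 = 1 \<and> y [^] (3::nat) = g [^] (3*k::nat))"
proof -
  define H where "H = range (\<lambda>i::int. g [^] i)"
  have sH: "subgroup H G" unfolding H_def using subgroup_of_powers[OF g] .
  have Hc: "H \<subseteq> carrier G" using sH subgroup.subset by blast
  have cardH: "card H = 3 ^ j"
    using cyclic_order_is_ord[OF g] carrier_subgroup_generated_by_singleton[OF g] ordg
    unfolding H_def order_def by simp
  have gpowH: "g [^] (k::nat) \<in> H" for k unfolding H_def by (metis int_pow_int rangeI)
  have Hnat: "\<exists>k::nat. u = g [^] k" if "u \<in> H" for u
    using that int_pow_to_nat[OF fin g] unfolding H_def by blast
  have mH: "a \<otimes> b \<in> H" if "a \<in> H" "b \<in> H" for a b using subgroup.m_closed[OF sH that] .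
  have iH: "inv a \<in> H" if "a \<in> H" for a using subgroup.m_inv_closed[OF sH that] .
  have oneH: "\<one> \<in> H" using subgroup.one_closed[OF sH] .
  have oddG: "odd (order G)" unfolding ordG by simp
  have rc3: "card (rcosets H) = 3"
  proof -
    have "card (rcosets H) * 3 ^ j = 3 * 3 ^ j" using lagrange[OF sH] unfolding cardH ordG by simp
    then show ?thesis by simp
  qed
  have "card H < card (carrier G)" using cardH ordG unfolding order_def by simp
  then have "\<not> carrier G \<subseteq> H" using Hc by (metis subset_antisym less_irrefl)
  then obtain y where y: "y \<in> carrier G" "y \<notin> H" by blast
  have yy: "y \<otimes> y \<notin> H"
  proof
    assume yyH: "y \<otimes> y \<in> H"
    obtain q where q: "order G + 1 = 2 * q" using oddG by (metis odd_succ_div_two dvd_mult_div_cancel even_add odd_one) 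
    have "y = y [^] (order G + 1)" using y pow_order_eq_1 by (simp add: nat_pow_Suc2[symmetric])
    also have "\<dots> = (y [^] (2::nat)) [^] q" using q y by (simp add: nat_pow_pow)
    also have "\<dots> = (y \<otimes> y) [^] q" using y by (simp add: numeral_2_eq_2)
    finally have "y = (y \<otimes> y) [^] q" .
    moreover have "(y \<otimes> y) [^] (int q) \<in> H" using yyH sH subgroup_int_pow_closed by blast
    ultimately show False using y by (simp add: int_pow_int)
  qed
  have yinv: "inv y \<notin> H" using y iH by fastforce
  have cover: "u \<in> H \<or> u \<otimes> inv y \<in> H \<or> u \<otimes> inv (y \<otimes> y) \<in> H" if u: "u \<in> carrier G" for u
  proof -
    have r1: "H #> \<one> \<in> rcosets H" by (rule rcosetsI[OF Hc], simp)
    have r2: "H #> y \<in> rcosets H" by (rule rcosetsI[OF Hc], simp add: y)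
    have r3: "H #> (y \<otimes> y) \<in> rcosets H" by (rule rcosetsI[OF Hc], simp add: y)
    have sub: "{H #> \<one>, H #> y, H #> (y \<otimes> y)} \<subseteq> rcosets H" using r1 r2 r3 by simp
    have d1: "H #> \<one> \<noteq> H #> y" using coset_eq_iff[OF sH] y yinv by simp
    have d2: "H #> \<one> \<noteq> H #> (y \<otimes> y)" using coset_eq_iff[OF sH] y yy iH by (metis inv_inv l_one m_closed one_closed inv_closed)
    have d3: "H #> y \<noteq> H #> (y \<otimes> y)"
    proof -
      have "y \<otimes> inv (y \<otimes> y) = inv y" using y by (simp add: inv_mult_group m_assoc[symmetric])
      then show ?thesis using coset_eq_iff[OF sH] y yinv by simp
    qed
    have "card {H #> \<one>, H #> y, H #> (y \<otimes> y)} = 3" using d1 d2 d3 by simp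
    moreover have "finite (rcosets H)" using fin rcosets_part_G[OF sH]
      by (metis finite_Pow_iff finite_subset rcosets_subset_PowG sH)
    ultimately have eq: "{H #> \<one>, H #> y, H #> (y \<otimes> y)} = rcosets H"
      using sub rc3 by (metis card_subset_eq)
    have "H #> u \<in> rcosets H" using u Hc by (auto intro: rcosetsI)
    then have "H #> u = H #> \<one> \<or> H #> u = H #> y \<or> H #> u = H #> (y \<otimes> y)" using eq by blast
    then show ?thesis using coset_eq_iff[OF sH] u y by auto
  qed
  have rtrans: "a \<otimes> inv c \<in> H" if "a \<otimes> inv b \<in> H" "b \<otimes> inv c \<in> H" "a \<in> carrier G" "b \<in> carrier G" "c \<in> carrier G" for a b c
  proof -
    have "a \<otimes> inv c = (a \<otimes> inv b) \<otimes> (b \<otimes> inv c)" using that by (simp add: m_assoc cancel_l2)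
    then show ?thesis using mH that by simp
  qed
  have rsym: "b \<otimes> inv a \<in> H" if "a \<otimes> inv b \<in> H" "a \<in> carrier G" "b \<in> carrier G" for a b
  proof -
    have "b \<otimes> inv a = inv (a \<otimes> inv b)" using that by (simp add: inv_mult_group)
    then show ?thesis using iH that by simp
  qed
  have oddj: "odd (ord g)" using ordg by simp
  have norm: "y \<otimes> g \<otimes> inv y \<in> H"
  proof (rule ccontr)
    assume nn: "y \<otimes> g \<otimes> inv y \<notin> H"
    have c1: "y \<otimes> g \<notin> H"
    proof
      assume "y \<otimes> g \<in> H"
      then have "(y \<otimes> g) \<otimes> inv g \<in> H" using mH iH g H_def gpowH by (metis int_pow_1 rangeI)
      then show False using y g by (simp add: m_assoc)
    qed
    have A: "y \<otimes> g \<otimes> inv (y \<otimes> y) \<in> H" using cover[of "y \<otimes> g"] c1 nn y g by auto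
    have B: "y \<otimes> y \<otimes> g \<otimes> inv y \<in> H"
    proof -
      have c2: "y \<otimes> y \<otimes> g \<notin> H"
      proof
        assume "y \<otimes> y \<otimes> g \<in> H"
        then have "(y \<otimes> y \<otimes> g) \<otimes> inv g \<in> H" using mH iH g H_def by (metis int_pow_1 rangeI)
        then show False using y g yy by (simp add: m_assoc)
      qed
      have c3: "y \<otimes> y \<otimes> g \<otimes> inv (y \<otimes> y) \<notin> H"
      proof
        assume h: "y \<otimes> y \<otimes> g \<otimes> inv (y \<otimes> y) \<in> H"
        have "y \<otimes> y \<otimes> g \<otimes> inv (y \<otimes> g) \<in> H"
          using rtrans[OF h rsym[OF A]] y g by simp
        moreover have "y \<otimes> y \<otimes> g \<otimes> inv (y \<otimes> g) = y \<otimes> inv \<one> \<otimes> y \<otimes> inv y"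
          using y g rc_eq[of "y \<otimes> y" y g] by (simp add: m_assoc)
        ultimately show False using y yinv by (simp add: m_assoc)
      qed
      show ?thesis using cover[of "y \<otimes> y \<otimes> g"] c2 c3 y g by auto
    qed
    have ind: "(even k \<longrightarrow> y \<otimes> g [^] k \<otimes> inv y \<in> H) \<and> (odd k \<longrightarrow> y \<otimes> g [^] k \<otimes> inv (y \<otimes> y) \<in> H)" for k :: nat
    proof (induction k)
      case 0 then show ?case using y oneH by simp
    next
      case (Suc k)
      have e: "y \<otimes> g [^] Suc k = (y \<otimes> g [^] k) \<otimes> g" using y g by (simp add: m_assoc)
      show ?case
      proof (cases "even k")
        case True
        then have "y \<otimes> g [^] k \<otimes> inv y \<in> H" using Suc by simp
        then have "(y \<otimes> g [^] k \<otimes> g) \<otimes> inv (y \<otimes> g) \<in> H" using rc_eq y g by simp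
        then have "(y \<otimes> g [^] k \<otimes> g) \<otimes> inv (y \<otimes> y) \<in> H" using rtrans[OF _ A] y g by simp
        then show ?thesis using True e by simp
      next
        case False
        then have "y \<otimes> g [^] k \<otimes> inv (y \<otimes> y) \<in> H" using Suc by simp
        then have "(y \<otimes> g [^] k \<otimes> g) \<otimes> inv (y \<otimes> y \<otimes> g) \<in> H" using rc_eq y g by simp
        then have "(y \<otimes> g [^] k \<otimes> g) \<otimes> inv y \<in> H" using rtrans[OF _ B] y g by simp
        then show ?thesis using False e by simp
      qed
    qed
    have "y \<otimes> g [^] ord g \<otimes> inv (y \<otimes> y) \<in> H" using ind[of "ord g"] oddj by simp
    then have "y \<otimes> inv (y \<otimes> y) \<in> H" using g y by simp
    moreover have "y \<otimes> inv (y \<otimes> y) = inv y" using y by (simp add: inv_mult_group m_assoc[symmetric])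
    ultimately show False using yinv by simp
  qed
  obtain \<rho> where rho: "y \<otimes> g \<otimes> inv y = g [^] (\<rho>::nat)" using Hnat[OF norm] by blast
  have y3: "y [^] (3::nat) \<in> H"
  proof -
    have e1: "y [^] (3::nat) \<otimes> inv y = y \<otimes> y" using y by (simp add: numeral_3_eq_3 m_assoc)
    have e2: "y [^] (3::nat) \<otimes> inv (y \<otimes> y) = y" using y by (simp add: numeral_3_eq_3 m_assoc inv_mult_group cancel_l1)
    show ?thesis using cover[of "y [^] (3::nat)"] e1 e2 y yy by auto
  qed
  obtain s where s: "y [^] (3::nat) = g [^] (s::nat)" using Hnat[OF y3] by blast
  have rho1: "\<rho> mod 3 = 1"
  proof -
    have a1: "y [^] (3::nat) \<otimes> g \<otimes> inv (y [^] (3::nat)) = g [^] (\<rho> ^ 3)" using conj_iter[OF y(1) g rho] .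
    have a2: "y [^] (3::nat) \<otimes> g \<otimes> inv (y [^] (3::nat)) = g [^] (1::nat)"
    proof -
      have c: "g [^] s \<otimes> g = g \<otimes> g [^] s" using g nat_pow_Suc2[of g s] by simp
      show ?thesis unfolding s using g by (simp add: c m_assoc)
    qed
    have "g [^] (\<rho> ^ 3) = g [^] (1::nat)" using trans[OF sym[OF a1] a2] .
    then have "g [^] (int (\<rho> ^ 3)) = g [^] (int 1)" unfolding int_pow_int .
    then have d1: "int (ord g) dvd int 1 - int (\<rho> ^ 3)" using int_pow_eq g by blast
    obtain j' where j': "j = Suc j'" using j by (cases j) auto
    have e3: "int (ord g) = 3 * 3 ^ j'" using ordg j' by simp
    have "(3::int) dvd int (ord g)" unfolding e3 by (rule dvd_triv_left)
    then have d3: "(3::int) dvd 1 - int (\<rho> ^ 3)" using dvd_trans[OF _ d1] by simp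
    then have "1 mod 3 = int (\<rho> ^ 3) mod 3" by (simp only: mod_eq_dvd_iff)
    then have "int (\<rho> ^ 3) mod 3 = 1" by simp
    then have "int (\<rho> ^ 3 mod 3) = 1" by (simp add: of_nat_mod)
    then have "\<rho> ^ 3 mod 3 = 1" by linarith
    then show ?thesis using cube_mod3 by simp
  qed
  have s3: "3 dvd s"
  proof (rule ccontr)
    assume ns: "\<not> 3 dvd s"
    have "coprime 3 s" using ns prime_imp_coprime[of "3::nat" s] by simp
    then have cop: "gcd (ord g) s = 1" using ordg by simp
    have s0: "s \<noteq> 0" using ns by (metis dvd_0_right)
    have o3: "ord (y [^] (3::nat)) = 3 ^ j" unfolding s using ord_pow_gen[OF g, of s] cop ordg s0 by simp
    have o3': "ord (y [^] (3::nat)) = ord y div gcd (ord y) 3" using ord_pow_gen[OF y(1), of 3] by simp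
    have gd: "gcd (ord y) 3 dvd 3" by simp
    then have "gcd (ord y) 3 = 1 \<or> gcd (ord y) 3 = 3"
      using prime_nat_iff[of 3] by auto
    then have "ord y = 3 ^ Suc j"
    proof
      assume h: "gcd (ord y) 3 = 1"
      then have "ord y = 3 ^ j" using o3 o3' by simp
      then have "gcd (ord y) 3 = 3" using j by (cases j) auto
      then show ?thesis using h by simp
    next
      assume h: "gcd (ord y) 3 = 3"
      then have "3 dvd ord y" by (metis gcd_dvd1)
      moreover have "ord y div 3 = 3 ^ j" using o3 o3' h by simp
      ultimately show ?thesis by auto
    qed
    then show False using noc y ordG by simp
  qed
  then obtain k where "s = 3 * k" by blast
  then show ?thesis using y yy rho rho1 s unfolding H_def by blast
qed

end


lemma nt9:
  assumes "(\<rho>::nat) mod 3 = 1"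
  shows "9 dvd (\<rho> ^ 1 * (2*k+3*b) + \<rho> ^ 2 * (2*k+3*b) + \<rho> ^ 3 * (2*k+3*b) + 3 * k)"
proof -
  obtain q where q: "\<rho> = 3 * q + 1" using assms by (metis mult.commute div_mult_mod_eq)
  have "\<rho> ^ 1 * (2*k+3*b) + \<rho> ^ 2 * (2*k+3*b) + \<rho> ^ 3 * (2*k+3*b) + 3 * k
      = 9 * ((3*q^3 + 4*q^2 + 2*q) * (2*k+3*b) + k + b)"
    unfolding q by (simp add: algebra_simps power2_eq_square power3_eq_cube)
  then show ?thesis by (metis dvd_triv_left)
qed

context group begin

lemma pow_vanish:
  assumes z: "z \<in> carrier G" and g: "g \<in> carrier G"
    and r: "z \<otimes> g \<otimes> inv z = g [^] (\<rho>::nat)" and r1: "\<rho> mod 3 = 1"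
    and z3: "z [^] (3::nat) = g [^] (3 * k::nat)"
    and ordg: "ord g = 3 ^ j" and j: "j \<ge> 2"
  shows "(z \<otimes> g [^] (2*k+3*b::nat)) [^] ((3::nat) ^ (j - 1)) = \<one>"
proof -
  define c where "c = 2*k+3*b"
  have gc: "g [^] c \<in> carrier G" using g by simp
  have "(z \<otimes> g [^] c) [^] (3::nat) = g [^] (\<rho> ^ 1 * c) \<otimes> g [^] (\<rho> ^ 2 * c) \<otimes> g [^] (\<rho> ^ 3 * c) \<otimes> g [^] (3 * k)"
    unfolding cube_formula[OF z gc] conj_pow_gen[OF z g r] by (simp only: z3)
  also have "\<dots> = g [^] (\<rho> ^ 1 * c + \<rho> ^ 2 * c + \<rho> ^ 3 * c + 3 * k)"
    using g by (simp add: nat_pow_mult)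
  finally have cube: "(z \<otimes> g [^] c) [^] (3::nat) = g [^] (\<rho> ^ 1 * c + \<rho> ^ 2 * c + \<rho> ^ 3 * c + 3 * k)" .
  obtain t where t: "\<rho> ^ 1 * c + \<rho> ^ 2 * c + \<rho> ^ 3 * c + 3 * k = 9 * t"
    using nt9[OF r1, of k b] unfolding c_def by (metis dvdE)
  obtain i where i: "j = i + 2" using j by (metis add.commute le_Suc_ex)
  have e: "(3::nat) ^ (j - 1) = 3 * 3 ^ i" using i by simp
  have "(z \<otimes> g [^] c) [^] ((3::nat) ^ (j - 1)) = ((z \<otimes> g [^] c) [^] (3::nat)) [^] ((3::nat) ^ i)"
    unfolding e using z gc by (simp add: nat_pow_pow)
  also have "\<dots> = g [^] (9 * t * 3 ^ i)" unfolding cube t using g by (simp add: nat_pow_pow)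
  also have "9 * t * 3 ^ i = ord g * t" using ordg i by (simp add: power_add)
  also have "g [^] (ord g * t) = \<one>" using g by (simp add: nat_pow_pow[symmetric])
  finally show ?thesis unfolding c_def .
qed

end


lemma dvd_pow3_le:
  assumes "(d::nat) dvd 3 ^ Suc j" "d \<noteq> 3 ^ Suc j"
  shows "d \<le> 3 ^ j"
proof -
  obtain i where i: "i \<le> Suc j" "d = 3 ^ i" using assms(1) divides_primepow_nat[of 3 d "Suc j"] by auto
  then have "i \<le> j" using assms(2) by (metis le_SucE)
  then show ?thesis using i by (simp add: power_increasing)
qed

context group begin

lemma pow_diff_in:
  assumes g: "g \<in> carrier G"
  shows "g [^] (a::nat) \<otimes> inv (g [^] (b::nat)) \<in> range (\<lambda>i::int. g [^] i)"
proof -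
  have "g [^] (int a - int b) = g [^] (a::nat) \<otimes> inv (g [^] (b::nat))"
    using g by (simp add: int_pow_diff int_pow_int)
  then show ?thesis by (metis rangeI)
qed

lemma E_card:
  assumes g: "g \<in> carrier G" and z: "z \<in> carrier G" and fin: "finite (carrier G)"
    and ordg: "ord g = 3 ^ j" and j: "j \<ge> 1"
  shows "card ((\<lambda>b. z \<otimes> g [^] (2*k+3*b::nat)) ` {..<3^(j-1)}) = 3 ^ (j - 1)"
proof -
  have o3: "ord (g [^] (3::nat)) = 3 ^ (j - 1)"
  proof -
    have "(3::nat) dvd ord g" using ordg j by (cases j) auto
    then have "ord (g [^] (3::nat)) = ord g div 3" using ord_pow[OF g] by simp
    then show ?thesis using ordg j by (cases j) auto
  qed
  have inj3: "inj_on (\<lambda>x. (g [^] (3::nat)) [^] x) {0 .. ord (g [^] (3::nat)) - 1}"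
    using ord_inj[of "g [^] (3::nat)"] g by simp
  have "inj_on (\<lambda>b. z \<otimes> g [^] (2*k+3*b::nat)) {..<3^(j-1)}"
  proof (rule inj_onI)
    fix a b assume a: "a \<in> {..<3^(j-1)}" and b: "b \<in> {..<3^(j-1)}"
      and eq: "z \<otimes> g [^] (2*k+3*a::nat) = z \<otimes> g [^] (2*k+3*b::nat)"
    have "g [^] (2*k+3*a::nat) = g [^] (2*k+3*b::nat)" using eq z g by simp
    then have "g [^] (2*k) \<otimes> (g [^] (3::nat)) [^] a = g [^] (2*k) \<otimes> (g [^] (3::nat)) [^] b"
      using g by (simp add: nat_pow_mult nat_pow_pow)
    then have "(g [^] (3::nat)) [^] a = (g [^] (3::nat)) [^] b" using g by simp
    moreover have "a \<in> {0 .. ord (g [^] (3::nat)) - 1}" "b \<in> {0 .. ord (g [^] (3::nat)) - 1}"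
      using a b o3 by auto
    ultimately show "a = b" using inj3 by (meson inj_onD)
  qed
  then show ?thesis by (simp add: card_image)
qed

lemma psi_bound_main:
  assumes fin: "finite (carrier G)" and g: "g \<in> carrier G"
    and ordg: "ord g = 3 ^ j" and j: "j \<ge> 2" and ordG: "order G = 3 ^ Suc j"
    and noc: "\<forall>u\<in>carrier G. ord u \<noteq> order G"
  shows "3 * (\<Sum>u\<in>carrier G. ord u) \<le> 7 * 9 ^ j"
proof -
  obtain y \<rho> k where y: "y \<in> carrier G" "y \<notin> range (\<lambda>i::int. g [^] i)" "y \<otimes> y \<notin> range (\<lambda>i::int. g [^] i)"
    and rho: "y \<otimes> g \<otimes> inv y = g [^] (\<rho>::nat)" "\<rho> mod 3 = 1" and y3: "y [^] (3::nat) = g [^] (3*k::nat)"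
    using core[OF fin g ordg _ ordG noc] j by auto
  define y2 where "y2 = y [^] (2::nat)"
  have y2c: "y2 \<in> carrier G" unfolding y2_def using y by simp
  have y2e: "y2 = y \<otimes> y" unfolding y2_def using y by (simp add: numeral_2_eq_2)
  have rho2: "y2 \<otimes> g \<otimes> inv y2 = g [^] (\<rho> ^ 2)" unfolding y2_def using conj_iter[OF y(1) g rho(1)] .
  have rho21: "\<rho> ^ 2 mod 3 = 1" 
  proof -
    have "\<rho> ^ 2 mod 3 = (\<rho> mod 3) ^ 2 mod 3" by (simp add: power_mod)
    then show ?thesis using rho(2) by simp
  qed
  have y23: "y2 [^] (3::nat) = g [^] (3*(2*k)::nat)"
  proof -
    have "y2 [^] (3::nat) = (y [^] (3::nat)) [^] (2::nat)" unfolding y2_def using y by (simp add: nat_pow_pow)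
    also have "\<dots> = g [^] (3*(2*k)::nat)" unfolding y3 using g by (simp add: nat_pow_pow)
    finally show ?thesis .
  qed
  have rho1: "\<one> \<otimes> g \<otimes> inv \<one> = g [^] (1::nat)" using g by simp
  have one3: "\<one> [^] (3::nat) = g [^] (3*0::nat)" by simp
  define E where "E = (\<lambda>z k. (\<lambda>b. z \<otimes> g [^] (2*k+3*b::nat)) ` {..<3^(j-1)})"
  define S where "S = E \<one> 0 \<union> E y k \<union> E y2 (2*k)"
  have Ec: "E z kk \<subseteq> carrier G" if "z \<in> carrier G" for z kk unfolding E_def using that g by auto
  have Sc: "S \<subseteq> carrier G" unfolding S_def using Ec y y2c by auto
  have van: "u [^] ((3::nat) ^ (j - 1)) = \<one>" if "u \<in> S" for u
  proof -
    from that obtain b where "u = \<one> \<otimes> g [^] (2*0+3*b::nat) \<or> u = y \<otimes> g [^] (2*k+3*b::nat) \<or> u = y2 \<otimes> g [^] (2*(2*k)+3*b::nat)"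
      unfolding S_def E_def by auto
    then show ?thesis
      using pow_vanish[OF one_closed g rho1 _ one3 ordg j] pow_vanish[OF y(1) g rho y3 ordg j]
        pow_vanish[OF y2c g rho2 rho21 y23 ordg j] by auto
  qed
  have ordS: "ord u \<le> 3 ^ (j - 1)" if "u \<in> S" for u
  proof -
    have "ord u dvd 3 ^ (j - 1)" using van[OF that] pow_eq_id that Sc by blast
    then show ?thesis by (simp add: dvd_imp_le)
  qed
  have ordO: "ord u \<le> 3 ^ j" if "u \<in> carrier G" for u
    using dvd_pow3_le ord_dvd_group_order[OF that] noc that ordG by metis
  have cE: "card (E z kk) = 3 ^ (j - 1)" if "z \<in> carrier G" for z kk
    unfolding E_def using E_card[OF g that fin ordg] j by simp
  have d1: "E \<one> 0 \<inter> E y k = {}"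
  proof (rule ccontr)
    assume "E \<one> 0 \<inter> E y k \<noteq> {}"
    then obtain a b where "\<one> \<otimes> g [^] (2*0+3*a::nat) = y \<otimes> g [^] (2*k+3*b::nat)" unfolding E_def by auto
    then have "y = g [^] (3*a::nat) \<otimes> inv (g [^] (2*k+3*b::nat))" using y g by (simp add: inv_solve_right)
    then show False using pow_diff_in[OF g] y by metis
  qed
  have d2: "E \<one> 0 \<inter> E y2 (2*k) = {}"
  proof (rule ccontr)
    assume "E \<one> 0 \<inter> E y2 (2*k) \<noteq> {}"
    then obtain a b where "\<one> \<otimes> g [^] (2*0+3*a::nat) = y2 \<otimes> g [^] (2*(2*k)+3*b::nat)" unfolding E_def by auto
    then have "y2 = g [^] (3*a::nat) \<otimes> inv (g [^] (2*(2*k)+3*b::nat))" using y2c g by (simp add: inv_solve_right)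
    then show False using pow_diff_in[OF g] y y2e by metis
  qed
  have d3: "E y k \<inter> E y2 (2*k) = {}"
  proof (rule ccontr)
    assume "E y k \<inter> E y2 (2*k) \<noteq> {}"
    then obtain a b where "y \<otimes> g [^] (2*k+3*a::nat) = y2 \<otimes> g [^] (2*(2*k)+3*b::nat)" unfolding E_def by auto
    then have "y \<otimes> g [^] (2*k+3*a::nat) = y \<otimes> (y \<otimes> g [^] (2*(2*k)+3*b::nat))" using y g by (simp add: y2e m_assoc)
    then have "g [^] (2*k+3*a::nat) = y \<otimes> g [^] (2*(2*k)+3*b::nat)" using y g by simp
    then have "y = g [^] (2*k+3*a::nat) \<otimes> inv (g [^] (2*(2*k)+3*b::nat))" using y g by (simp add: inv_solve_right)
    then show False using pow_diff_in[OF g] y by metis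
  qed
  have finE: "finite (E z kk)" for z kk unfolding E_def by simp
  have cS: "card S = 3 ^ j"
  proof -
    have "card S = card (E \<one> 0) + card (E y k) + card (E y2 (2*k))"
      unfolding S_def using d1 d2 d3 finE by (simp add: card_Un_disjoint Int_Un_distrib2)
    also have "\<dots> = 3 * 3 ^ (j - 1)" using cE y y2c by simp
    also have "\<dots> = 3 ^ j" using j by (cases j) auto
    finally show ?thesis .
  qed
  have cG: "card (carrier G) = 3 ^ Suc j" using ordG unfolding order_def .
  have "(\<Sum>u\<in>carrier G. ord u) = (\<Sum>u\<in>S. ord u) + (\<Sum>u\<in>carrier G - S. ord u)"
    using Sc fin by (metis sum.subset_diff add.commute)
  also have "(\<Sum>u\<in>S. ord u) \<le> (\<Sum>u\<in>S. 3 ^ (j - 1))" using ordS by (rule sum_mono)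
  also have "(\<Sum>u\<in>carrier G - S. ord u) \<le> (\<Sum>u\<in>carrier G - S. 3 ^ j)" using ordO by (intro sum_mono) auto
  also have "(\<Sum>u\<in>S. (3::nat) ^ (j - 1)) + (\<Sum>u\<in>carrier G - S. 3 ^ j) = 3 ^ j * 3 ^ (j - 1) + (3 ^ Suc j - 3 ^ j) * 3 ^ j"
    using cS cG Sc fin by (simp add: card_Diff_subset finite_subset)
  finally have le1: "(\<Sum>u\<in>carrier G. ord u) \<le> 3 ^ j * 3 ^ (j - 1) + (3 ^ Suc j - 3 ^ j) * 3 ^ j" by simp
  have eq1: "3 * (3 ^ j * 3 ^ (j - 1) + (3 ^ Suc j - 3 ^ j) * 3 ^ j) = 7 * (9::nat) ^ j"
  proof -
    obtain i where i: "j = Suc i" using j by (cases j) auto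
    show ?thesis unfolding i by (simp add: power_mult_distrib[symmetric] algebra_simps)
  qed
  show ?thesis unfolding eq1[symmetric] using le1 by (rule mult_le_mono2)
qed

end


lemma iso_by_card:
  assumes K: "group K" and G: "group G" and f: "f \<in> hom K G" and fin: "finite (carrier K)"
    and c: "card (carrier K) = card (carrier G)"
    and ker: "\<forall>x\<in>carrier K. f x = \<one>\<^bsub>G\<^esub> \<longrightarrow> x = \<one>\<^bsub>K\<^esub>"
  shows "f \<in> iso K G"
proof -
  interpret group_hom K G f using K G f by (simp add: group_hom_def group_hom_axioms_def)
  have "kernel K G f = {\<one>\<^bsub>K\<^esub>}" unfolding kernel_def using ker by auto
  then have inj: "inj_on f (carrier K)" using inj_iff_trivial_ker by simp
  have sub: "f ` carrier K \<subseteq> carrier G" using f by (rule hom_carrier)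
  have cardim: "card (f ` carrier K) = card (carrier G)" using card_image[OF inj] c by simp
  have "card (carrier K) > 0" using fin G.one_closed card_gt_0_iff by blast
  then have finG: "finite (carrier G)" using c card_ge_0_finite by force
  have "f ` carrier K = carrier G" using card_subset_eq[OF finG sub cardim] .
  then show ?thesis using inj f by (simp add: Group.iso_iff)
qed

context group begin

lemma pow_mod_ord: "g \<in> carrier G \<Longrightarrow> g [^] (m::nat) = g [^] (m mod ord g)"
proof -
  assume g: "g \<in> carrier G"
  have "g [^] m = g [^] (ord g * (m div ord g) + m mod ord g)" by (simp only: mult_div_mod_eq)
  also have "\<dots> = (g [^] ord g) [^] (m div ord g) \<otimes> g [^] (m mod ord g)"
    by (simp only: nat_pow_pow[OF g] nat_pow_mult[OF g])
  also have "\<dots> = g [^] (m mod ord g)" using g by simp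
  finally show ?thesis .
qed

lemma cyclic_iso:
  assumes fin: "finite (carrier G)" and g: "g \<in> carrier G" and o: "ord g = order G"
  shows "G \<cong> integer_mod_group (order G)"
proof -
  define N where "N = order G"
  have N0: "N > 0" unfolding N_def using fin by (simp add: order_gt_0_iff_finite)
  have cK: "carrier (integer_mod_group N) = {0..<int N}" using N0 by (simp add: carrier_integer_mod_group)
  define f where "f = (\<lambda>i::int. g [^] i)"
  have hom: "f \<in> hom (integer_mod_group N) G"
  proof (rule homI)
    fix x assume "x \<in> carrier (integer_mod_group N)"
    show "f x \<in> carrier G" unfolding f_def using g by simp
  next
    fix x y assume "x \<in> carrier (integer_mod_group N)" "y \<in> carrier (integer_mod_group N)"
    have "g [^] ((x + y) mod int N) = g [^] (x + y)"
      using int_pow_eq[OF g] o unfolding N_def by (simp add: mod_eq_dvd_iff[symmetric])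
    then show "f (x \<otimes>\<^bsub>integer_mod_group N\<^esub> y) = f x \<otimes> f y"
      unfolding f_def using g by (simp add: int_pow_mult)
  qed
  have ker: "\<forall>x\<in>carrier (integer_mod_group N). f x = \<one> \<longrightarrow> x = \<one>\<^bsub>integer_mod_group N\<^esub>"
  proof (intro ballI impI)
    fix x assume x: "x \<in> carrier (integer_mod_group N)" and fx: "f x = \<one>"
    then have "int N dvd x" using int_pow_eq_id[OF g] o unfolding f_def N_def by simp
    moreover have x0: "0 \<le> x" "x < int N" using x cK by auto
    ultimately have "x mod int N = 0" "x mod int N = x" 
      by (simp add: dvd_imp_mod_0) (rule mod_pos_pos_trivial[OF x0])
    then show "x = \<one>\<^bsub>integer_mod_group N\<^esub>" by simp
  qed
  have "f \<in> iso (integer_mod_group N) G"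
    using iso_by_card[OF group_integer_mod_group is_group hom] ker cK N0 unfolding N_def order_def by simp
  then have "integer_mod_group N \<cong> G" by (rule is_isoI)
  then show ?thesis unfolding N_def using group.iso_sym[OF group_integer_mod_group] by blast
qed

end


lemma psi_cyc_lb: "6 * 9 ^ j \<le> psi (integer_mod_group (3 ^ Suc j))"
proof -
  define N where "N = (3::nat) ^ Suc j"
  define Z where "Z = integer_mod_group N"
  interpret Z: group Z unfolding Z_def by simp
  have N1: "N > 1" unfolding N_def by (rule one_less_power) auto
  have cZ: "carrier Z = {0..<int N}" unfolding Z_def using N1 by (simp add: carrier_integer_mod_group)
  have tot: "int k \<in> carrier Z \<and> Z.ord (int k) = N" if k: "k \<in> totatives N" for k
  proof
    have k0: "0 < k" "k \<le> N" "coprime k N" using k by (auto simp: in_totatives_iff)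
    have "k \<noteq> N" using k0(3) N1 by auto
    then show kc: "int k \<in> carrier Z" using k0 cZ by auto
    have "(Z.ord (int k) = N) \<longleftrightarrow> (\<forall>n. (int k) [^]\<^bsub>Z\<^esub> n = \<one>\<^bsub>Z\<^esub> \<longleftrightarrow> N dvd n)"
      using Z.ord_unique[OF kc] .
    moreover have "(int k) [^]\<^bsub>Z\<^esub> n = \<one>\<^bsub>Z\<^esub> \<longleftrightarrow> N dvd n" for n
    proof -
      have "(int k) [^]\<^bsub>Z\<^esub> n = \<one>\<^bsub>Z\<^esub> \<longleftrightarrow> (int n * int k) mod int N = 0" unfolding Z_def by simp
      also have "\<dots> \<longleftrightarrow> N dvd n * k" by (metis dvd_eq_mod_eq_0 of_nat_dvd_iff of_nat_mult)
      also have "\<dots> \<longleftrightarrow> N dvd n" using k0(3) by (simp add: coprime_commute coprime_dvd_mult_left_iff)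
      finally show ?thesis .
    qed
    ultimately show "Z.ord (int k) = N" by simp
  qed
  have sub: "int ` totatives N \<subseteq> carrier Z" using tot by auto
  have "(\<Sum>x\<in>int ` totatives N. Z.ord x) \<le> (\<Sum>x\<in>carrier Z. Z.ord x)"
    using sub cZ by (intro sum_mono2) auto
  moreover have "(\<Sum>x\<in>int ` totatives N. Z.ord x) = (\<Sum>k\<in>totatives N. Z.ord (int k))"
    by (simp add: sum.reindex)
  moreover have "\<dots> = (\<Sum>k\<in>totatives N. N)" using tot by simp
  moreover have "\<dots> = totient N * N" by (simp add: totient_def)
  moreover have "totient N = 3 ^ j * 2" unfolding N_def using totient_prime_power_Suc[of 3 j] by simp
  ultimately have "3 ^ j * 2 * N \<le> psi Z" using N1 unfolding psi_def Z_def by simp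
  moreover have "3 ^ j * 2 * N = 6 * 9 ^ j" unfolding N_def by (simp add: power_mult_distrib[symmetric])
  ultimately show ?thesis unfolding Z_def N_def by simp
qed

context group begin

lemma c3c3_iso:
  assumes fin: "finite (carrier G)" and oG: "order G = 9" and g: "g \<in> carrier G" and y: "y \<in> carrier G"
    and og: "ord g = 3" and oy: "ord y = 3" and com: "g \<otimes> y = y \<otimes> g"
    and y1: "y \<notin> range (\<lambda>i::int. g [^] i)" and y2: "y \<otimes> y \<notin> range (\<lambda>i::int. g [^] i)"
  shows "G \<cong> DirProd (integer_mod_group 3) (integer_mod_group 3)"
proof -
  define K where "K = DirProd (integer_mod_group 3) (integer_mod_group 3)"
  have gK: "group K" unfolding K_def by (simp add: DirProd_group)
  have cK: "carrier K = {0..<3} \<times> {0..<3}" unfolding K_def by (simp add: carrier_integer_mod_group)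
  define f where "f = (\<lambda>p::int\<times>int. g [^] nat (fst p) \<otimes> y [^] nat (snd p))"
  have comm: "g [^] (c::nat) \<otimes> y [^] (b::nat) = y [^] b \<otimes> g [^] c" for b c
  proof -
    have "g [^] c \<otimes> y = y \<otimes> g [^] c" using group_commutes_pow[OF com g y] .
    then have "y [^] b \<otimes> g [^] c = g [^] c \<otimes> y [^] b" using group_commutes_pow[of y "g [^] c" b] g y by simp
    then show ?thesis by simp
  qed
  have pg: "g [^] ((a::nat) mod 3) = g [^] a" for a using pow_mod_ord[OF g, of a] og by simp
  have py: "y [^] ((a::nat) mod 3) = y [^] a" for a using pow_mod_ord[OF y, of a] oy by simp
  have hom: "f \<in> hom K G"
  proof (rule homI)
    fix x assume "x \<in> carrier K"
    show "f x \<in> carrier G" unfolding f_def using g y by simp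
  next
    fix p q assume p: "p \<in> carrier K" and q: "q \<in> carrier K"
    obtain a b where ab: "p = (a, b)" "0 \<le> a" "0 \<le> b" using p cK by (cases p) auto
    obtain c d where cd: "q = (c, d)" "0 \<le> c" "0 \<le> d" using q cK by (cases q) auto
    have e1: "nat ((a + c) mod 3) = (nat a + nat c) mod 3" using ab cd by (simp add: nat_mod_distrib nat_add_distrib)
    have e2: "nat ((b + d) mod 3) = (nat b + nat d) mod 3" using ab cd by (simp add: nat_mod_distrib nat_add_distrib)
    have "f (p \<otimes>\<^bsub>K\<^esub> q) = g [^] (nat a + nat c) \<otimes> y [^] (nat b + nat d)"
      unfolding K_def f_def ab cd by (simp add: e1 e2 pg py)
    also have "\<dots> = g [^] nat a \<otimes> (g [^] nat c \<otimes> y [^] nat b) \<otimes> y [^] nat d"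
      using g y by (simp add: nat_pow_mult[symmetric] m_assoc)
    also have "\<dots> = g [^] nat a \<otimes> (y [^] nat b \<otimes> g [^] nat c) \<otimes> y [^] nat d" by (simp only: comm[of "nat c" "nat b"])
    also have "\<dots> = f p \<otimes> f q" unfolding f_def ab cd using g y by (simp add: m_assoc)
    finally show "f (p \<otimes>\<^bsub>K\<^esub> q) = f p \<otimes> f q" .
  qed
  have ker: "\<forall>x\<in>carrier K. f x = \<one> \<longrightarrow> x = \<one>\<^bsub>K\<^esub>"
  proof (intro ballI impI)
    fix p assume p: "p \<in> carrier K" and fp: "f p = \<one>"
    obtain a b where ab: "p = (a, b)" "0 \<le> a" "a < 3" "0 \<le> b" "b < 3" using p cK by (cases p) auto
    have "g [^] nat a \<otimes> y [^] nat b = \<one>" using fp unfolding f_def ab by simp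
    then have "y [^] nat b \<otimes> g [^] nat a = \<one>" using g y by (simp add: inv_comm)
    then have eq: "y [^] nat b = inv (g [^] nat a)" using g y by (simp add: inv_equality)
    have "g [^] (- int (nat a)) = inv (g [^] nat a)" using g by (simp add: int_pow_neg int_pow_int)
    then have inr: "inv (g [^] nat a) \<in> range (\<lambda>i::int. g [^] i)" by (metis rangeI)
    have "nat b \<noteq> 1" using eq inr y1 y by auto
    moreover have "nat b \<noteq> 2" using eq inr y2 y by (auto simp: numeral_2_eq_2)
    ultimately have b0: "b = 0" using ab by auto
    then have "inv (g [^] nat a) = \<one>" using eq by simp
    then have "inv (inv (g [^] nat a)) = \<one>" by simp
    then have "g [^] nat a = \<one>" using g by simp
    then have "3 dvd nat a" using pow_eq_id[OF g] og by simp
    moreover have "nat a < 3" using ab by simp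
    ultimately have "nat a = 0" by (metis dvd_imp_le not_less neq0_conv)
    then have "a = 0" using ab by simp
    then show "p = \<one>\<^bsub>K\<^esub>" using b0 ab unfolding K_def by simp
  qed
  have "f \<in> iso K G"
    using iso_by_card[OF gK is_group hom] ker cK oG unfolding order_def by simp
  then have "K \<cong> G" by (rule is_isoI)
  then show ?thesis using group.iso_sym[OF gK] unfolding K_def by blast
qed

end


lemma (in group) main_thm:
  assumes fin: "finite (carrier G)"
    and "\<exists>k::nat. order G = 3 ^ k"
    and "psi' G > 31 / 77"
  shows "(\<exists>t::nat. G \<cong> cyclic_grp (3 ^ t)) \<or> G \<cong> DirProd (cyclic_grp 3) (cyclic_grp 3)"
proof -
  from assms(2) obtain n where n: "order G = 3 ^ n" by blast
  show ?thesis
  proof (cases "\<exists>g\<in>carrier G. ord g = order G")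
    case True
    then obtain g where g: "g \<in> carrier G" "ord g = order G" by blast
    have "G \<cong> integer_mod_group (order G)" using cyclic_iso[OF fin g] .
    then show ?thesis using n by auto
  next
    case False
    then have noc: "\<forall>u\<in>carrier G. ord u \<noteq> order G" by blast
    have n0: "n \<noteq> 0"
    proof
      assume "n = 0"
      then have "ord \<one> = order G" using n by simp
      then show False using noc by blast
    qed
    have "card (carrier G) > 1" using n n0 unfolding order_def using one_less_power[of "3::nat" n] by simp
    then obtain u where u: "u \<in> carrier G" "u \<noteq> \<one>"
    proof -
      assume h: "\<And>u. u \<in> carrier G \<Longrightarrow> u \<noteq> \<one> \<Longrightarrow> thesis"
      show thesis
      proof (rule ccontr)
        assume "\<not> thesis"
        then have "carrier G \<subseteq> {\<one>}" using h by blast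
        then have "card (carrier G) \<le> 1" using card_mono[of "{\<one>}" "carrier G"] by simp
        then show False using \<open>card (carrier G) > 1\<close> by simp
      qed
    qed
    have ou1: "ord u \<noteq> 1" using u ord_eq_1 by blast
    obtain i where i: "i \<le> n" "ord u = 3 ^ i"
      using ord_dvd_group_order[OF u(1)] n divides_primepow_nat[of 3 "ord u" n] by auto
    have i0: "i \<noteq> 0" using i ou1 by auto
    have iN: "i \<noteq> n" using i noc u n by auto
    obtain j where j: "n = Suc j" "j \<ge> 1" using n0 i i0 iN by (cases n) auto
    show ?thesis
    proof (cases "j = 1")
      case True
      then have ordG: "order G = 3 ^ Suc 1" using n j by simp
      have og: "ord u = 3 ^ 1" using i i0 iN j True by (cases i) auto
      obtain y \<rho> k where y: "y \<in> carrier G" "y \<notin> range (\<lambda>i::int. u [^] i)" "y \<otimes> y \<notin> range (\<lambda>i::int. u [^] i)"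
        and rho: "y \<otimes> u \<otimes> inv y = u [^] (\<rho>::nat)" "\<rho> mod 3 = 1" and y3: "y [^] (3::nat) = u [^] (3*k::nat)"
        using core[OF fin u(1) og _ ordG noc] by auto
      have "u [^] \<rho> = u [^] (\<rho> mod 3)" using pow_mod_ord[OF u(1), of \<rho>] og by simp
      then have "y \<otimes> u \<otimes> inv y = u" using rho u by simp
      then have com: "u \<otimes> y = y \<otimes> u" using u y by (simp add: inv_solve_right')
      have "y [^] (3::nat) = (u [^] (3::nat)) [^] k" using y3 u by (simp add: nat_pow_pow)
      also have "\<dots> = \<one>" using og u pow_ord_eq_1[OF u(1)] by simp
      finally have "ord y dvd 3" using pow_eq_id[OF y(1)] by simp
      moreover have "y \<noteq> \<one>"
      proof
        assume "y = \<one>"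
        then have "y = u [^] (0::int)" by simp
        then show False using y(2) by (metis rangeI)
      qed
      then have "ord y \<noteq> 1" using ord_eq_1 y by blast
      ultimately have oy: "ord y = 3" using divides_primepow_nat[of 3 "ord y" 1] by (auto simp: le_Suc_eq)
      have "G \<cong> DirProd (integer_mod_group 3) (integer_mod_group 3)"
        using c3c3_iso[OF fin _ u(1) y(1) _ oy com y(2) y(3)] ordG og by simp
      then show ?thesis by simp
    next
      case False
      then have j2: "j \<ge> 2" using j by simp
      have ordG: "order G = 3 ^ Suc j" using n j by simp
      have bound: "3 * psi G \<le> 7 * 9 ^ j"
      proof (cases "\<exists>g\<in>carrier G. ord g = 3 ^ j")
        case True
        then obtain g where g: "g \<in> carrier G" "ord g = 3 ^ j" by blast
        show ?thesis using psi_bound_main[OF fin g(1) g(2) j2 ordG noc] unfolding psi_def .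
      next
        case False
        have le: "ord v \<le> 3 ^ (j - 1)" if v: "v \<in> carrier G" for v
        proof -
          obtain l where l: "l \<le> Suc j" "ord v = 3 ^ l"
            using ord_dvd_group_order[OF v] ordG divides_primepow_nat[of 3 "ord v" "Suc j"] by auto
          have "l \<noteq> Suc j" using l noc v ordG by auto
          moreover have "l \<noteq> j" using l False v by auto
          ultimately have "l \<le> j - 1" using l by auto
          then show ?thesis using l by (simp add: power_increasing)
        qed
        have "psi G \<le> (\<Sum>v\<in>carrier G. 3 ^ (j - 1))" unfolding psi_def using le by (rule sum_mono)
        also have "\<dots> = 3 ^ Suc j * 3 ^ (j - 1)" using ordG unfolding order_def by simp
        also have "\<dots> = 9 ^ j" using j by (cases j) (auto simp: power_mult_distrib[symmetric] power_add[symmetric])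
        finally show ?thesis by simp
      qed
      have lb: "6 * 9 ^ j \<le> psi (cyclic_grp (order G))" using psi_cyc_lb[of j] ordG by simp
      have "77 * psi G \<le> 31 * psi (cyclic_grp (order G))" using bound lb by linarith
      then have r: "77 * real (psi G) \<le> 31 * real (psi (cyclic_grp (order G)))"
        by (metis of_nat_le_iff of_nat_mult of_nat_numeral)
      have "(0::nat) < 6 * 9 ^ j" by simp
      then have "0 < psi (cyclic_grp (order G))" using lb by (rule less_le_trans)
      then have pos: "real (psi (cyclic_grp (order G))) > 0" by simp
      have "psi' G \<le> 31 / 77" unfolding psi'_def using r pos by (simp add: divide_simps)
      then show ?thesis using assms(3) by simp
    qed
  qed
qed

theorem proposition3p4:
  fixes G :: "('a, 'b) monoid_scheme"
  assumes "group G" and "finite (carrier G)"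
    and "\<exists>k::nat. order G = 3 ^ k"
    and "psi' G > 31 / 77"
  shows "(\<exists>t::nat. G \<cong> cyclic_grp (3 ^ t)) \<or> G \<cong> DirProd (cyclic_grp 3) (cyclic_grp 3)"
  using group.main_thm[OF assms(1) assms(2) assms(3) assms(4)] .


end
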